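(* Fix $(N,r)\in\{(1^{*},6),(2,4),(3,3),(4,2)\}$. Let $\alpha$ be a complex parameter, $\beta:=1-\alpha$, and set $$\omega_0={}_2F_1\!\left(\tfrac1r,1-\tfrac1r;1;\alpha\right),\qquad \omega_1=\frac{i}{\sqrt N}\,{}_2F_1\!\left(\tfrac1r,1-\tfrac1r;1;\beta\right),\qquad \tau=\frac{\omega_1}{\omega_0},$$ where for $N=1^{*}$ one takes $\sqrt N=1$. (Locally, $\alpha$ is regarded as a function of $\tau$, with $\operatorname{Im}\tau>0$.) Let $\partial_\tau:=\frac{1}{2\pi i}\frac{\partial}{\partial\tau}$ and define $$A=\omega_0,\quad B=(1-\alpha)^{1/r}A,\quad C=\alpha^{1/r}A,\quad E=\partial_\tau\log\left(C^rB^r\right).$$ Assign weights $k=1$ to $A,B,C$ and $k=2$ to $E$. Define $$\hat E=E+\frac r6\cdot\frac{-3}{\pi\operatorname{Im}\tau},$$ and, for a quantity of weight $k$, $\hat\partial_\tau=\partial_\tau+\frac{k}{12}\cdot\frac{-3}{\pi\operatorname{Im}\tau}$ (so $\hat\partial_\tau$ acts with $k=1$ on $A,B,C$ and with $k=2$ on $\hat E$). Then $$\hat\partial_\tau A=\frac1{2r}A\Big(\hat E+\frac{C^r-B^r}{A^r}A^2\Big),\quad \hat\partial_\tau B=\frac1{2r}B(\hat E-A^2),\quad \hat\partial_\tau C=\frac1{2r}C(\hat E+A^2),\quad \hat\partial_\tau\hat E=\frac1{2r}(\hat E^2-A^4).$$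
   Context: $\omega_0,\omega_1$ form a basis of solutions of the Picard–Fuchs operator $\theta^2-\alpha(\theta+1/r)(\theta+1-1/r)$, $\theta=\alpha\,\partial/\partial\alpha$, of the elliptic curve family over the modular curve $X_0(N)=\Gamma_0(N)\backslash\mathcal H^*$ (with $\Gamma_0(1^* )$ the unique index-2 normal subgroup of $\mathrm{PSL}(2,\mathbb Z)$); ${}_2F_1$ is the Gauss hypergeometric function. *)

theory Defs
  imports "HOL-Complex_Analysis.Complex_Analysis"
begin

definition hyp2F1 :: "complex \<Rightarrow> complex \<Rightarrow> complex \<Rightarrow> complex \<Rightarrow> complex" where
  "hyp2F1 a b c z =
     (\<Sum>n. pochhammer a n * pochhammer b n / (pochhammer c n * fact n) * z ^ n)"

text \<open>Wirtinger derivative d/dz = (d/dx - i d/dy)/2 of a (real-differentiable) function;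
  it coincides with the complex derivative for holomorphic functions.\<close>
definition wirtinger :: "(complex \<Rightarrow> complex) \<Rightarrow> complex \<Rightarrow> complex" where
  "wirtinger f z =
     (frechet_derivative f (at z) 1 - \<i> * frechet_derivative f (at z) \<i>) / 2"

definition dtau :: "(complex \<Rightarrow> complex) \<Rightarrow> complex \<Rightarrow> complex" where
  "dtau f t = wirtinger f t / (2 * complex_of_real pi * \<i>)"

text \<open>Periods omega0, omega1 (the period ratio is tau = omega1/omega0); sqrtN = sqrt N (= 1 for N = 1*).\<close>
definition omega0 :: "nat \<Rightarrow> complex \<Rightarrow> complex" where
  "omega0 r a = hyp2F1 (1 / of_nat r) (1 - 1 / of_nat r) 1 a"

definition omega1 :: "real \<Rightarrow> nat \<Rightarrow> complex \<Rightarrow> complex" where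
  "omega1 sqrtN r a = \<i> / complex_of_real sqrtN * hyp2F1 (1 / of_nat r) (1 - 1 / of_nat r) 1 (1 - a)"

definition Afun :: "nat \<Rightarrow> (complex \<Rightarrow> complex) \<Rightarrow> complex \<Rightarrow> complex" where
  "Afun r \<alpha> s = omega0 r (\<alpha> s)"

definition Bfun :: "nat \<Rightarrow> (complex \<Rightarrow> complex) \<Rightarrow> complex \<Rightarrow> complex" where
  "Bfun r \<alpha> s = (1 - \<alpha> s) powr (1 / of_nat r) * Afun r \<alpha> s"

definition Cfun :: "nat \<Rightarrow> (complex \<Rightarrow> complex) \<Rightarrow> complex \<Rightarrow> complex" where
  "Cfun r \<alpha> s = (\<alpha> s) powr (1 / of_nat r) * Afun r \<alpha> s"

text \<open>E = d_tau log(C^r B^r), written as the logarithmic derivative.\<close>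
definition Efun :: "nat \<Rightarrow> (complex \<Rightarrow> complex) \<Rightarrow> complex \<Rightarrow> complex" where
  "Efun r \<alpha> s = dtau (\<lambda>u. Cfun r \<alpha> u ^ r * Bfun r \<alpha> u ^ r) s
                   / (Cfun r \<alpha> s ^ r * Bfun r \<alpha> s ^ r)"

definition Ehat :: "nat \<Rightarrow> (complex \<Rightarrow> complex) \<Rightarrow> complex \<Rightarrow> complex" where
  "Ehat r \<alpha> s = Efun r \<alpha> s + complex_of_real (real r / 6 * (-3 / (pi * Im s)))"

definition dhat :: "real \<Rightarrow> (complex \<Rightarrow> complex) \<Rightarrow> complex \<Rightarrow> complex" where
  "dhat k f s = dtau f s + complex_of_real (k / 12 * (-3 / (pi * Im s))) * f s"

end

theory Submission
  imports Defs
begin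


definition hc :: "real \<Rightarrow> nat \<Rightarrow> complex" where
  "hc ar n = pochhammer (complex_of_real ar) n * pochhammer (1 - complex_of_real ar) n
             / (pochhammer 1 n * fact n)"

definition hF :: "real \<Rightarrow> complex fps" where "hF ar = Abs_fps (hc ar)"

lemma hyp2F1_eq: "hyp2F1 (complex_of_real ar) (1 - complex_of_real ar) 1 z = eval_fps (hF ar) z"
  by (simp add: hyp2F1_def eval_fps_def hF_def hc_def)

lemma hc_0 [simp]: "hc ar 0 = 1" by (simp add: hc_def)

lemma hc_Suc: "hc ar (Suc n) = hc ar n * ((of_real ar + of_nat n) * (1 - of_real ar + of_nat n))
   / (of_nat (Suc n))^2"
  by (simp add: hc_def pochhammer_Suc pochhammer_fact[symmetric] field_simps power2_eq_square)

lemma hc_real: "hc ar n = of_real (pochhammer ar n * pochhammer (1 - ar) n / (fact n * fact n))"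
proof -
  have "1 - complex_of_real ar = of_real (1 - ar)" by simp
  then show ?thesis unfolding hc_def pochhammer_fact[symmetric]
    by (simp only: pochhammer_of_real) simp
qed

lemma hc_bound:
  assumes "0 \<le> ar" "ar \<le> 1"
  shows "norm (hc ar n) \<le> 1"
proof (induction n)
  case 0 then show ?case by simp
next
  case (Suc n)
  have "norm ((of_real ar + of_nat n) * (1 - of_real ar + of_nat n) :: complex)
      = (ar + n) * (1 - ar + n)"
  proof -
    have "(of_real ar + of_nat n) * (1 - of_real ar + of_nat n) = (of_real ((ar + n) * (1 - ar + n)) :: complex)"
      by simp
    then show ?thesis using assms by (simp only: norm_of_real) simp
  qed
  also have "\<dots> \<le> (real (Suc n))^2" using assms
    by (simp add: power2_eq_square algebra_simps) (smt (verit) mult_nonneg_nonneg of_nat_0_le_iff)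
  finally have h: "norm ((of_real ar + of_nat n) * (1 - of_real ar + of_nat n) :: complex) \<le> (real (Suc n))^2" .
  have "norm (hc ar (Suc n)) = norm (hc ar n) * norm ((of_real ar + of_nat n) * (1 - of_real ar + of_nat n) :: complex) / (real (Suc n))^2"
    unfolding hc_Suc by (simp add: norm_mult norm_divide norm_power del: of_nat_Suc)
  also have "\<dots> \<le> 1 * (real (Suc n))^2 / (real (Suc n))^2"
    by (intro divide_right_mono mult_mono Suc h) auto
  finally show ?case by simp
qed

lemma hF_radius:
  assumes "0 \<le> ar" "ar \<le> 1"
  shows "fps_conv_radius (hF ar) \<ge> 1"
  unfolding fps_conv_radius_def
proof (rule conv_radius_geI_ex')
  fix \<rho> :: real assume "0 < \<rho>" "ereal \<rho> < 1"
  then have r: "0 < \<rho>" "\<rho> < 1" by auto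
  show "summable (\<lambda>n. fps_nth (hF ar) n * of_real \<rho> ^ n)"
  proof (rule summable_norm_cancel, rule summable_comparison_test[of _ "\<lambda>n. \<rho>^n"])
    show "\<exists>N. \<forall>n\<ge>N. norm (norm (fps_nth (hF ar) n * of_real \<rho> ^ n)) \<le> \<rho> ^ n"
      using hc_bound[OF assms] r
      by (auto simp: hF_def norm_mult norm_power intro!: mult_left_le_one_le)
    show "summable (\<lambda>n. \<rho>^n)" using r by (simp add: summable_geometric)
  qed
qed




definition hP :: "real \<Rightarrow> complex fps" where
  "hP ar = fps_X * (1 - fps_X) * fps_deriv (hF ar)"

lemma hP_nth: "hP ar $ n = (if n = 0 then 0 else fps_deriv (hF ar) $ (n-1))
    - (if n = 0 then 0 else if n = 1 then 0 else fps_deriv (hF ar) $ (n-2))"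
proof -
  have "hP ar = fps_X * fps_deriv (hF ar) - fps_X * (fps_X * fps_deriv (hF ar))"
    by (simp add: hP_def algebra_simps)
  then show ?thesis by (simp add: fps_sub_nth numeral_2_eq_2)
qed

lemma hP_deriv: "fps_deriv (hP ar) = fps_const (of_real (ar * (1 - ar))) * hF ar"
proof (rule fps_ext)
  fix n
  show "fps_deriv (hP ar) $ n = (fps_const (of_real (ar * (1 - ar))) * hF ar) $ n"
  proof (cases n)
    case 0
    then show ?thesis
      by (simp add: hP_nth hF_def hc_Suc[of ar 0, simplified] algebra_simps)
  next
    case (Suc m)
    have e: "hc ar (Suc (Suc m)) * (of_nat (Suc (Suc m)))^2 =
        hc ar (Suc m) * ((of_real ar + of_nat (Suc m)) * (1 - of_real ar + of_nat (Suc m)))"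
      unfolding hc_Suc[of ar "Suc m"] by (simp del: of_nat_Suc)
    show ?thesis using Suc
      apply (simp add: hP_nth hF_def del: of_nat_Suc)
      using e by (simp add: algebra_simps power2_eq_square)
  qed
qed

lemma hP_radius:
  assumes "0 \<le> ar" "ar \<le> 1"
  shows "fps_conv_radius (hP ar) \<ge> 1"
proof -
  have "fps_conv_radius (fps_deriv (hF ar)) \<ge> 1"
    using fps_conv_radius_deriv[of "hF ar"] hF_radius[OF assms] by (meson order_trans)
  moreover have "fps_conv_radius (1 - fps_X :: complex fps) = \<infinity>"
    using fps_conv_radius_diff[of "1::complex fps" fps_X] by simp
  moreover have r2: "fps_conv_radius (fps_X * (1 - fps_X) :: complex fps) = \<infinity>"
    using fps_conv_radius_mult[of "fps_X :: complex fps" "1 - fps_X"] calculation(2) by simp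
  ultimately show ?thesis unfolding hP_def
    using fps_conv_radius_mult[of "fps_X * (1 - fps_X) :: complex fps" "fps_deriv (hF ar)"]
    by simp
qed

definition F :: "real \<Rightarrow> complex \<Rightarrow> complex" where "F ar z = eval_fps (hF ar) z"
definition F1 :: "real \<Rightarrow> complex \<Rightarrow> complex" where "F1 ar z = eval_fps (fps_deriv (hF ar)) z"
definition P :: "real \<Rightarrow> complex \<Rightarrow> complex" where "P ar z = eval_fps (hP ar) z"

context fixes ar :: real assumes ar: "0 \<le> ar" "ar \<le> 1" begin

lemma rad1: "norm z < 1 \<Longrightarrow> ereal (norm z) < fps_conv_radius (hF ar)"
  using hF_radius[OF ar] by (metis ereal_less(3) le_less_trans less_ereal.simps(1) linorder_not_le order_less_le_trans)

lemma rad2: "norm z < 1 \<Longrightarrow> ereal (norm z) < fps_conv_radius (fps_deriv (hF ar))"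
  using rad1 fps_conv_radius_deriv[of "hF ar"] by (meson order_less_le_trans)

lemma rad3: "norm z < 1 \<Longrightarrow> ereal (norm z) < fps_conv_radius (hP ar)"
  using hP_radius[OF ar] by (metis ereal_less(3) le_less_trans less_ereal.simps(1) linorder_not_le order_less_le_trans)

lemma F_deriv: "norm z < 1 \<Longrightarrow> (F ar has_field_derivative F1 ar z) (at z)"
  unfolding F_def F1_def using has_field_derivative_eval_fps rad1 by blast

lemma P_deriv: "norm z < 1 \<Longrightarrow> (P ar has_field_derivative of_real (ar * (1 - ar)) * F ar z) (at z)"
proof -
  assume z: "norm z < 1"
  have "(P ar has_field_derivative eval_fps (fps_deriv (hP ar)) z) (at z)"
    unfolding P_def using has_field_derivative_eval_fps rad3[OF z] by blast
  also have "eval_fps (fps_deriv (hP ar)) z = of_real (ar * (1 - ar)) * F ar z"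
    unfolding hP_deriv F_def using rad1[OF z]
    by (subst eval_fps_mult) auto
  finally show ?thesis .
qed

lemma P_eq: "norm z < 1 \<Longrightarrow> P ar z = z * (1 - z) * F1 ar z"
proof -
  assume z: "norm z < 1"
  have r: "fps_conv_radius (1 - fps_X :: complex fps) = \<infinity>"
    using fps_conv_radius_diff[of "1::complex fps" fps_X] by simp
  have r2: "fps_conv_radius (fps_X * (1 - fps_X) :: complex fps) = \<infinity>"
    using fps_conv_radius_mult[of "fps_X :: complex fps" "1 - fps_X"] r by simp
  show ?thesis unfolding P_def hP_def F1_def
    using rad2[OF z] r r2
    by (simp add: eval_fps_mult eval_fps_diff)
qed

lemma F_0: "F ar 0 = 1" by (simp add: F_def eval_fps_at_0 hF_def)

lemma F_cont: "norm z < 1 \<Longrightarrow> isCont (F ar) z"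
  using F_deriv DERIV_isCont by blast
lemma F1_cont: "norm z < 1 \<Longrightarrow> isCont (F1 ar) z"
  unfolding F1_def using continuous_eval_fps rad2 by blast

end



lemma abel_lim:
  fixes b :: "nat \<Rightarrow> complex"
  assumes lim: "b \<longlonglongrightarrow> L"
  shows "((\<lambda>x::real. of_real x * (\<Sum>n. b n * of_real (1-x)^n)) \<longlongrightarrow> L) (at_right 0)"
proof (rule tendstoI)
  fix \<epsilon> :: real assume e: "\<epsilon> > 0"
  define d where "d n = b n - L" for n
  obtain N where N: "\<And>n. n \<ge> N \<Longrightarrow> norm (d n) < \<epsilon>/2"
    using lim e unfolding LIMSEQ_iff d_def by (metis half_gt_zero)
  have "d \<longlonglongrightarrow> 0" unfolding d_def using tendsto_diff[OF lim tendsto_const[of L]] by simp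
  then have "Bseq d" by (intro convergent_imp_Bseq convergentI)
  then obtain B where B: "B > 0" "\<And>n. norm (d n) \<le> B" by (meson BseqE)
  define M where "M = (\<Sum>n<N. norm (d n))"
  have M0: "M \<ge> 0" unfolding M_def by (simp add: sum_nonneg)
  define \<delta> where "\<delta> = min 1 (\<epsilon> / (2 * (M + 1)))"
  have dpos: "\<delta> > 0" using e M0 by (simp add: \<delta>_def)
  have main: "dist (of_real x * (\<Sum>n. b n * of_real (1-x)^n)) L < \<epsilon>" if x: "0 < x" "x < \<delta>" for x :: real
  proof -
    define y where "y = 1 - x"
    have x1: "x < 1" using x by (simp add: \<delta>_def)
    have y: "0 < y" "y < 1" using x x1 by (auto simp: y_def)
    have sg: "summable (\<lambda>n. y^n)" using y by (simp add: summable_geometric)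
    have nb: "norm (norm (d n) * y^n) \<le> B * y^n" for n
      using B(2)[of n] y by (simp add: abs_mult mult_right_mono)
    have sd: "summable (\<lambda>n. norm (d n) * y^n)"
      by (rule summable_comparison_test[OF _ summable_mult[OF sg, of B]]) (use nb in blast)
    have sd': "summable (\<lambda>n. d n * of_real y^n)"
      by (rule summable_norm_cancel) (use sd y in \<open>simp add: norm_mult norm_power\<close>)
    have sL: "(\<lambda>n. L * of_real y ^ n) sums (L / of_real x)"
    proof -
      have "(\<lambda>n. (of_real y::complex) ^ n) sums (1 / (1 - of_real y))"
        using y by (intro geometric_sums) simp
      then have "(\<lambda>n. L * (of_real y::complex) ^ n) sums (L * (1 / (1 - of_real y)))"
        by (rule sums_mult)
      then show ?thesis by (simp add: y_def)
    qed
    have "(\<lambda>n. d n * of_real y ^ n + L * of_real y ^ n) sums (suminf (\<lambda>n. d n * of_real y^n) + L / of_real x)"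
      by (intro sums_add summable_sums sd' sL)
    then have eq: "(\<Sum>n. b n * of_real (1-x)^n) = suminf (\<lambda>n. d n * of_real y^n) + L / of_real x"
      by (simp add: d_def y_def algebra_simps sums_iff)
    have "of_real x * (\<Sum>n. b n * of_real (1-x)^n) - L = of_real x * suminf (\<lambda>n. d n * of_real y^n)"
      unfolding eq using x by (simp add: field_simps)
    then have "dist (of_real x * (\<Sum>n. b n * of_real (1-x)^n)) L = x * norm (suminf (\<lambda>n. d n * of_real y^n))"
      using x by (simp add: dist_norm norm_mult)
    also have "norm (suminf (\<lambda>n. d n * of_real y^n)) \<le> (\<Sum>n. norm (d n) * y^n)"
      using summable_norm[of "\<lambda>n. d n * of_real y^n"] sd y by (simp add: norm_mult norm_power)
    also have "(\<Sum>n. norm (d n) * y^n) \<le> (\<Sum>n. (if n < N then norm (d n) else 0) + \<epsilon>/2 * y^n)"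
    proof (rule suminf_le)
      fix n show "norm (d n) * y^n \<le> (if n < N then norm (d n) else 0) + \<epsilon>/2 * y^n"
      proof (cases "n < N")
        case True
        have "norm (d n) * y^n \<le> norm (d n) * 1"
          using y by (intro mult_left_mono) (auto simp: power_le_one)
        moreover have "0 \<le> \<epsilon>/2 * y^n" using e y by simp
        ultimately show ?thesis using True by simp
      next
        case False
        then show ?thesis using N[of n] y by (auto intro!: mult_right_mono)
      qed
    next
      show "summable (\<lambda>n. norm (d n) * y^n)" by (rule sd)
      show "summable (\<lambda>n. (if n < N then norm (d n) else 0) + \<epsilon>/2 * y^n)"
        using sums_If_finite_set[of "{..<N}" "\<lambda>n. norm (d n)"]
        by (intro summable_add summable_mult sg) (auto dest: sums_summable)
    qed
    also have "(\<Sum>n. (if n < N then norm (d n) else 0) + \<epsilon>/2 * y^n) = M + \<epsilon>/2 * (1 / (1 - y))"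
    proof -
      have "(\<lambda>n. (if n < N then norm (d n) else 0)) sums M"
        unfolding M_def using sums_If_finite_set[of "{..<N}" "\<lambda>n. norm (d n)"] by simp
      moreover have "(\<lambda>n. \<epsilon>/2 * y^n) sums (\<epsilon>/2 * (1 / (1 - y)))"
        using y by (intro sums_mult geometric_sums) simp
      ultimately show ?thesis by (intro sums_unique[symmetric] sums_add)
    qed
    finally have "dist (of_real x * (\<Sum>n. b n * of_real (1-x)^n)) L \<le> x * (M + \<epsilon>/2 * (1/(1-y)))"
      using x by (simp add: mult_left_mono)
    also have "\<dots> = x * M + \<epsilon>/2" using x by (simp add: y_def field_simps)
    also have "x * M < \<epsilon>/2"
    proof -
      have "x * M \<le> \<epsilon> / (2 * (M + 1)) * M" using x M0 by (intro mult_right_mono) (auto simp: \<delta>_def)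
      also have "\<dots> < \<epsilon>/2" using e M0 by (simp add: field_simps)
      finally show ?thesis .
    qed
    finally show ?thesis by simp
  qed
  show "\<forall>\<^sub>F x in at_right 0. dist (of_real x * (\<Sum>n. b n * of_real (1-x)^n)) L < \<epsilon>"
    unfolding eventually_at_right[OF dpos] using main dpos by blast
qed




lemma b_lim: "(\<lambda>n. of_nat (Suc n) * hc ar (Suc n)) \<longlonglongrightarrow> complex_of_real (sin (pi*ar)/pi)"
proof -
  define a where "a = complex_of_real ar"
  have lim: "(\<lambda>n. rGamma_series a n * rGamma_series (1-a) n * (of_nat n / of_nat (Suc n)))
       \<longlonglongrightarrow> rGamma a * rGamma (1-a) * 1"
    by (intro tendsto_mult rGamma_series_LIMSEQ LIMSEQ_n_over_Suc_n)
  have val: "rGamma a * rGamma (1-a) * 1 = complex_of_real (sin (pi*ar)/pi)"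
    unfolding a_def rGamma_reflection_complex by (simp flip: sin_of_real)
  have ev: "rGamma_series a n * rGamma_series (1-a) n * (of_nat n / of_nat (Suc n))
        = of_nat (Suc n) * hc ar (Suc n)" if n: "n \<ge> 1" for n
  proof -
    have ex: "exp (a * of_real (ln (real n))) * exp ((1 - a) * of_real (ln (real n))) = of_nat n"
    proof -
      have "exp (a * of_real (ln (real n))) * exp ((1 - a) * of_real (ln (real n)))
          = exp (of_real (ln (real n)))" by (simp add: exp_add[symmetric] algebra_simps)
      also have "\<dots> = of_real (exp (ln (real n)))" by (simp only: exp_of_real)
      also have "\<dots> = of_nat n" using n by simp
      finally show ?thesis .
    qed
    have A: "rGamma_series a n * rGamma_series (1-a) n
       = pochhammer a (n+1) * pochhammer (1-a) (n+1) / (fact n * fact n * of_nat n)"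
    proof -
      have "(fact n * exp (a * of_real (ln (real n)))) * (fact n * exp ((1-a) * of_real (ln (real n))))
          = fact n * fact n * (exp (a * of_real (ln (real n))) * exp ((1 - a) * of_real (ln (real n))))"
        by (simp only: ac_simps)
      then show ?thesis unfolding rGamma_series_def times_divide_times_eq ex by simp
    qed
    have B: "hc ar (Suc n) = pochhammer a (n+1) * pochhammer (1-a) (n+1) / (fact (Suc n) * fact (Suc n))"
      unfolding hc_def a_def pochhammer_fact[symmetric] by simp
    have aux: "X/(f*f*m) * (m/(m+1)) = (m+1) * (X/(((m+1)*f)*((m+1)*f)))"
      if "(f::complex) \<noteq> 0" "m \<noteq> 0" "m + 1 \<noteq> 0" for X f m
    proof -
      have "X/(f*f*m) * (m/(m+1)) = X/(f*f*(m+1))" using that by (simp add: divide_simps)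
      moreover have "(m+1) * (X/(((m+1)*f)*((m+1)*f))) = X/(f*f*(m+1))" using that by (simp add: divide_simps)
      ultimately show ?thesis by simp
    qed
    have "(of_nat n :: complex) + 1 \<noteq> 0" by (metis of_nat_Suc of_nat_eq_0_iff nat.distinct(1) add.commute)
    have s: "(of_nat (Suc n)::complex) = of_nat n + 1" by simp
    show ?thesis unfolding A B fact_Suc[of n] s
      by (rule aux) (use n \<open>(of_nat n :: complex) + 1 \<noteq> 0\<close> in auto)
  qed
  have "\<forall>\<^sub>F n in sequentially. rGamma_series a n * rGamma_series (1-a) n * (of_nat n / of_nat (Suc n))
        = of_nat (Suc n) * hc ar (Suc n)"
    using ev by (intro eventually_sequentiallyI[of 1])
  then show ?thesis by (rule Lim_transform_eventually[OF lim[unfolded val]])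
qed

lemma c_lim: "hc ar \<longlonglongrightarrow> 0"
proof -
  have "(\<lambda>n. of_nat (Suc n) * hc ar (Suc n) * (1 / of_nat (Suc n))) \<longlonglongrightarrow> complex_of_real (sin (pi*ar)/pi) * 0"
    by (intro tendsto_mult b_lim) (rule filterlim_compose[OF lim_1_over_n filterlim_Suc])
  then have "(\<lambda>n. hc ar (Suc n)) \<longlonglongrightarrow> 0"
    by (simp del: of_nat_Suc)
  then show ?thesis by (simp add: filterlim_sequentially_Suc)
qed

definition lens :: "complex set" where "lens = {z. norm z < 1 \<and> norm (1 - z) < 1}"

lemma lens_eq: "lens = ball 0 1 \<inter> ball 1 1"
  by (auto simp: lens_def dist_norm)

lemma convex_lens: "convex lens" unfolding lens_eq by (intro convex_Int convex_ball)
lemma open_lens: "open lens" unfolding lens_eq by auto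

lemma rearr: "(A::complex) * ((1-x)*(1-(1-x))*B) + D*(x*(1-x)*E) = c \<Longrightarrow>
   A*(1-x)*(x*B) + (x*D)*(1-x)*E = c"
  by (erule subst) (simp add: algebra_simps)

definition QW :: "real \<Rightarrow> complex \<Rightarrow> complex" where
  "QW ar z = F ar z * P ar (1 - z) + F ar (1 - z) * P ar z"

context fixes ar :: real assumes ar: "0 \<le> ar" "ar \<le> 1" begin

lemma QW_deriv: assumes z: "z \<in> lens" shows "(QW ar has_field_derivative 0) (at z)"
proof -
  have z1: "norm z < 1" and z2: "norm (1 - z) < 1" using z by (auto simp: lens_def)
  have m1: "((\<lambda>z. 1 - z) has_field_derivative -1) (at z)"
    using DERIV_diff[OF DERIV_const[of 1] DERIV_ident, of z] by simp
  have dF: "((\<lambda>z. F ar (1 - z)) has_field_derivative F1 ar (1 - z) * -1) (at z)"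
    using DERIV_chain2[OF F_deriv[OF ar z2] m1] .
  have dP: "((\<lambda>z. P ar (1 - z)) has_field_derivative of_real (ar * (1 - ar)) * F ar (1 - z) * -1) (at z)"
    using DERIV_chain2[OF P_deriv[OF ar z2] m1] .
  have "(QW ar has_field_derivative
      F1 ar z * P ar (1 - z) + of_real (ar * (1 - ar)) * F ar (1 - z) * - 1 * F ar z +
     (F1 ar (1 - z) * - 1 * P ar z + of_real (ar * (1 - ar)) * F ar z * F ar (1 - z))) (at z)"
    unfolding QW_def
    using DERIV_add[OF DERIV_mult[OF F_deriv[OF ar z1] dP] DERIV_mult[OF dF P_deriv[OF ar z1]]] .
  moreover have "F1 ar z * P ar (1 - z) + of_real (ar * (1 - ar)) * F ar (1 - z) * - 1 * F ar z +
     (F1 ar (1 - z) * - 1 * P ar z + of_real (ar * (1 - ar)) * F ar z * F ar (1 - z)) = 0"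
    unfolding P_eq[OF ar z1] P_eq[OF ar z2] by (simp add: algebra_simps)
  ultimately show ?thesis by simp
qed

end


context fixes ar :: real assumes ar: "0 \<le> ar" "ar \<le> 1" begin

lemma F_series: "F ar z = (\<Sum>n. hc ar n * z^n)"
  by (simp add: F_def eval_fps_def hF_def)
lemma F1_series: "F1 ar z = (\<Sum>n. of_nat (Suc n) * hc ar (Suc n) * z^n)"
  by (simp add: F1_def eval_fps_def hF_def)

lemma QW_const: "z \<in> lens \<Longrightarrow> QW ar z = complex_of_real (sin (pi*ar)/pi)"
proof -
  obtain c where c: "\<And>z. z \<in> lens \<Longrightarrow> QW ar z = c"
  proof -
    have "\<exists>c. \<forall>x\<in>lens. QW ar x = c"
      by (rule has_field_derivative_zero_constant[OF convex_lens])
         (rule has_field_derivative_at_within[OF QW_deriv[OF ar]])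
    then show ?thesis using that by blast
  qed
  define \<kappa> where "\<kappa> = complex_of_real (sin (pi*ar)/pi)"
  have t0: "((\<lambda>x::real. complex_of_real x) \<longlongrightarrow> 0) (at_right 0)"
    using tendsto_of_real[OF tendsto_ident_at[of 0 "{0<..}"]] by simp
  have lF: "((\<lambda>x::real. F ar (of_real x)) \<longlongrightarrow> 1) (at_right 0)"
    using isCont_tendsto_compose[OF F_cont[OF ar, of 0] t0] F_0[OF ar] by simp
  have lF1: "((\<lambda>x::real. F1 ar (of_real x)) \<longlongrightarrow> F1 ar 0) (at_right 0)"
    using isCont_tendsto_compose[OF F1_cont[OF ar, of 0] t0] by simp
  have l1: "((\<lambda>x::real. 1 - complex_of_real x) \<longlongrightarrow> 1) (at_right 0)"
    using tendsto_diff[OF tendsto_const t0, of 1] by simp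
  have a1: "((\<lambda>x::real. of_real x * F1 ar (1 - of_real x)) \<longlongrightarrow> \<kappa>) (at_right 0)"
    using abel_lim[OF b_lim[of ar]] unfolding F1_series \<kappa>_def by simp
  have a2: "((\<lambda>x::real. of_real x * F ar (1 - of_real x)) \<longlongrightarrow> 0) (at_right 0)"
    using abel_lim[OF c_lim[of ar]] unfolding F_series by simp
  have lim: "((\<lambda>x::real. F ar (of_real x) * (1 - of_real x) * (of_real x * F1 ar (1 - of_real x))
      + (of_real x * F ar (1 - of_real x)) * (1 - of_real x) * F1 ar (of_real x))
      \<longlongrightarrow> 1 * 1 * \<kappa> + 0 * 1 * F1 ar 0) (at_right 0)"
    by (intro tendsto_add tendsto_mult lF l1 a1 a2 lF1)
  have ev: "\<forall>\<^sub>F x in at_right 0. F ar (of_real x) * (1 - of_real x) * (of_real x * F1 ar (1 - of_real x))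
      + (of_real x * F ar (1 - of_real x)) * (1 - of_real x) * F1 ar (of_real x) = c"
  proof -
    have "\<forall>\<^sub>F x in at_right (0::real). 0 < x \<and> x < 1"
      by (subst eventually_at_right[OF zero_less_one]) (intro exI[of _ 1]; simp)
    then show ?thesis
    proof eventually_elim
      case (elim x)
      have x1: "norm (complex_of_real x) < 1" "norm (1 - complex_of_real x) < 1"
      proof -
        have "1 - complex_of_real x = of_real (1 - x)" by simp
        then show "norm (complex_of_real x) < 1" "norm (1 - complex_of_real x) < 1"
          using elim by (simp_all only: norm_of_real) simp_all
      qed
      then have "complex_of_real x \<in> lens" by (simp add: lens_def)
      from c[OF this] show ?case
        unfolding QW_def P_eq[OF ar x1(1)] P_eq[OF ar x1(2)] by (rule rearr)
    qed
  qed
  have "((\<lambda>x::real. c) \<longlongrightarrow> \<kappa>) (at_right 0)"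
    using Lim_transform_eventually[OF lim ev] by simp
  then have "c = \<kappa>" using tendsto_unique[OF trivial_limit_at_right_real tendsto_const] by blast
  then show "z \<in> lens \<Longrightarrow> QW ar z = complex_of_real (sin (pi*ar)/pi)" using c \<kappa>_def by simp
qed

end





lemma powr_m1: "(w::complex) \<noteq> 0 \<Longrightarrow> w powr (e - 1) = w powr e / w"
  by (simp add: powr_def exp_diff left_diff_distrib)



lemma powr_root: "(w::complex) \<noteq> 0 \<Longrightarrow> r > 0 \<Longrightarrow> (w powr (1 / of_nat r)) ^ r = w"
proof -
  assume w: "w \<noteq> 0" and r: "r > 0"
  have "(w powr (1 / of_nat r)) ^ r = exp (Ln w / of_nat r) ^ r"
    using w by (simp add: powr_def)
  also have "\<dots> = exp (of_nat r * (Ln w / of_nat r))" by (simp only: exp_of_nat_mult)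
  also have "of_nat r * (Ln w / of_nat r) = Ln w" using r by simp
  finally show ?thesis using w by simp
qed



lemma dtau_hol: "(f has_field_derivative D) (at t) \<Longrightarrow> dtau f t = D / (2 * complex_of_real pi * \<i>)"
proof -
  assume d: "(f has_field_derivative D) (at t)"
  have fd: "frechet_derivative f (at t) = (*) D"
    using frechet_derivative_at[OF has_field_derivative_imp_has_derivative[OF d]] by (rule sym)
  have "wirtinger f t = (D * 1 - \<i> * (D * \<i>)) / 2" unfolding wirtinger_def fd ..
  also have "\<dots> = D" by (simp add: algebra_simps)
  finally show ?thesis unfolding dtau_def by simp
qed

lemma phi_deriv:
  assumes "Im t \<noteq> 0"
  shows "((\<lambda>s. complex_of_real (K * inverse (Im s))) has_derivative
          (\<lambda>h. complex_of_real (- K * Im h / (Im t)^2))) (at t)"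
proof -
  have "((\<lambda>s. Im s) has_derivative Im) (at t)"
    using has_derivative_Im[OF has_derivative_ident] by simp
  then have "((\<lambda>s. inverse (Im s)) has_derivative (\<lambda>h. - (inverse (Im t) * Im h * inverse (Im t)))) (at t)"
    by (rule Deriv.has_derivative_inverse[where f=Im, OF assms])
  then have "((\<lambda>s. K * inverse (Im s)) has_derivative (\<lambda>h. K * - (inverse (Im t) * Im h * inverse (Im t)))) (at t)"
    by (rule has_derivative_mult_right)
  then have "((\<lambda>s. complex_of_real (K * inverse (Im s))) has_derivative
       (\<lambda>h. complex_of_real (K * - (inverse (Im t) * Im h * inverse (Im t))))) (at t)"
    by (rule has_derivative_of_real)
  moreover have "(\<lambda>h. complex_of_real (K * - (inverse (Im t) * Im h * inverse (Im t))))
      = (\<lambda>h. complex_of_real (- K * Im h / (Im t)^2))"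
  proof
    fix h
    have "K * - (inverse (Im t) * Im h * inverse (Im t)) = - K * Im h / (Im t)^2"
      by (simp add: field_simps power2_eq_square)
    then show "complex_of_real (K * - (inverse (Im t) * Im h * inverse (Im t))) = complex_of_real (- K * Im h / (Im t)^2)"
      by (rule arg_cong)
  qed
  ultimately show ?thesis by simp
qed
lemma dtau_nonhol:
  assumes d: "(f has_field_derivative D) (at t)" and y: "Im t \<noteq> 0"
    and S: "open S" "t \<in> S" and g: "\<And>s. s \<in> S \<Longrightarrow> g s = f s + complex_of_real (K * inverse (Im s))"
  shows "dtau g t = D / (2 * complex_of_real pi * \<i>) + complex_of_real (K / (4 * pi * (Im t)^2))"
proof -
  have "((\<lambda>s. f s + complex_of_real (K * inverse (Im s))) has_derivative
        (\<lambda>h. D * h + complex_of_real (- K * Im h / (Im t)^2))) (at t)"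
    by (intro has_derivative_add has_field_derivative_imp_has_derivative[OF d] phi_deriv y)
  then have "(g has_derivative (\<lambda>h. D * h + complex_of_real (- K * Im h / (Im t)^2))) (at t)"
    by (rule has_derivative_transform_within_open[OF _ S]) (use g in auto)
  then have fd: "frechet_derivative g (at t) = (\<lambda>h. D * h + complex_of_real (- K * Im h / (Im t)^2))"
    using frechet_derivative_at by metis
  define q where "q = complex_of_real (K / (Im t)^2)"
  have f1: "frechet_derivative g (at t) 1 = D" unfolding fd by simp
  have fi: "frechet_derivative g (at t) \<i> = D * \<i> - q" unfolding fd q_def by simp
  have w: "wirtinger g t = (D - \<i> * (D * \<i> - q)) / 2" unfolding wirtinger_def f1 fi ..
  have alg: "(D - \<i> * (D * \<i> - q)) / 2 / (2 * complex_of_real pi * \<i>)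
      = D / (2 * complex_of_real pi * \<i>) + q / (4 * complex_of_real pi)"
    using pi_gt_zero by (simp add: field_simps)
  have "complex_of_real (K / (4 * pi * (Im t)^2)) = q / (4 * complex_of_real pi)"
    unfolding q_def by (simp add: field_simps)
  then show ?thesis unfolding dtau_def w alg by simp
qed





lemma algEf:
  fixes a0 a1 A F1a T :: complex and N :: nat
  assumes a1: "a1 = T*a0*(1-a0)*A^2" and nz: "T \<noteq> 0" "a0 \<noteq> 0" "1 - a0 \<noteq> 0" "A \<noteq> 0" and N: "N \<ge> 1"
  shows "((a1*(1-a0) + a0*(0-a1)) * A^N + a0*(1-a0)*(of_nat N * ((F1a*a1) * A^(N - Suc 0)))) / T / (a0*(1-a0)*A^N)
     = (1 - 2*a0)*A^2 + of_nat N * (a0*(1-a0)*F1a) * A"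
proof -
  have p: "A^(N - Suc 0) = A^N / A" using N nz by (simp add: power_diff)
  show ?thesis unfolding p a1 using nz by (simp add: field_simps power2_eq_square)
qed

lemma algA:
  fixes a0 a1 A F1a T e z0 :: complex and r :: nat
  assumes a1: "a1 = T*a0*(1-a0)*A^2" and nz: "T \<noteq> 0" "A \<noteq> 0" "e \<noteq> 0"
  shows "F1a*a1/T + (-z0/4)*A = 1/(2*e)*A*(((1-2*a0)*A^2 + 2*e*(a0*(1-a0)*F1a)*A + (-e*z0/2))
     + (a0*A^r - (1-a0)*A^r)/A^r*A^2)"
proof -
  have q: "(a0*A^r - (1-a0)*A^r)/A^r = 2*a0 - 1" using nz by (simp add: field_simps)
  show ?thesis unfolding q a1 using nz by (simp add: field_simps power2_eq_square)
qed

lemma algB: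
  fixes a0 a1 A F1a T e z0 u :: complex
  assumes a1: "a1 = T*a0*(1-a0)*A^2" and nz: "T \<noteq> 0" "A \<noteq> 0" "e \<noteq> 0" "1 - a0 \<noteq> 0"
  shows "((1/e) * (u/(1-a0)) * (0 - a1) * A + u*(F1a*a1))/T + (-z0/4)*(u*A)
    = 1/(2*e)*(u*A)*(((1-2*a0)*A^2 + 2*e*(a0*(1-a0)*F1a)*A + (-e*z0/2)) - A^2)"
  unfolding a1 using nz by (simp add: field_simps power2_eq_square)

lemma algC:
  fixes a0 a1 A F1a T e z0 vv :: complex
  assumes a1: "a1 = T*a0*(1-a0)*A^2" and nz: "T \<noteq> 0" "A \<noteq> 0" "e \<noteq> 0" "a0 \<noteq> 0"
  shows "((1/e) * (vv/a0) * (a1) * A + vv*(F1a*a1))/T + (-z0/4)*(vv*A)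
    = 1/(2*e)*(vv*A)*(((1-2*a0)*A^2 + 2*e*(a0*(1-a0)*F1a)*A + (-e*z0/2)) + A^2)"
  unfolding a1 using nz by (simp add: field_simps power2_eq_square)

lemma algE:
  fixes a0 a1 A F1a T e z0 :: complex
  assumes a1: "a1 = T*a0*(1-a0)*A^2" and nz: "T \<noteq> 0" "e \<noteq> 0"
  shows "((-2*a1)*A^2 + (1-2*a0)*(2*A*(F1a*a1)) + 2*e*(((1/e)*(1-1/e)*A*a1)*A + (a0*(1-a0)*F1a)*(F1a*a1)))/T
     + (-e*z0^2/8) + (-z0/2)*(((1-2*a0)*A^2 + 2*e*(a0*(1-a0)*F1a)*A) + (-e*z0/2))
    = 1/(2*e)*((((1-2*a0)*A^2 + 2*e*(a0*(1-a0)*F1a)*A) + (-e*z0/2))^2 - A^4)"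
  unfolding a1 using nz by (simp add: field_simps power2_eq_square power4_eq_xxxx)
lemma keyalg:
  fixes c a0 a1 Fa Fb F1a F1b \<kappa> :: complex
  assumes h1: "(c * (F1b * (0 - a1)) * Fa - c * Fb * (F1a * a1)) / (Fa * Fa) = 1"
    and h2: "Fa * ((1 - a0) * (1 - (1 - a0)) * F1b) + Fb * (a0 * (1 - a0) * F1a) = \<kappa>"
    and h3: "c * \<kappa> = \<i> / (2 * of_real pi)" and Fa: "Fa \<noteq> 0"
  shows "a1 = 2 * of_real pi * \<i> * a0 * (1 - a0) * Fa^2"
proof -
  define S where "S = F1b*Fa + Fb*F1a"
  have e1: "c * (-a1) * S = Fa*Fa"
  proof -
    have "c * (F1b * (0 - a1)) * Fa - c * Fb * (F1a * a1) = Fa * Fa" using h1 Fa by (simp add: divide_eq_eq)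
    then show ?thesis unfolding S_def by (simp add: algebra_simps)
  qed
  have e2: "a0*(1-a0)*S = \<kappa>" using h2 unfolding S_def by (simp add: algebra_simps)
  have "c*(-a1)*(a0*(1-a0)*S) = a0*(1-a0)*(c*(-a1)*S)" by (simp only: ac_simps)
  then have "(c*\<kappa>)*(-a1) = a0*(1-a0)*(Fa*Fa)" unfolding e2 e1 by (simp only: ac_simps)
  then have "\<i> / (2 * of_real pi) * (-a1) = a0*(1-a0)*(Fa*Fa)" unfolding h3 .
  then have "-a1 = a0*(1-a0)*(Fa*Fa) * (2 * of_real pi) / \<i>"
    by (simp add: field_simps)
  then show ?thesis by (simp add: field_simps power2_eq_square)
qed
theorem theorem3p3:
  fixes sqrtN :: real and r :: nat and U :: "complex set"
    and \<alpha> :: "complex \<Rightarrow> complex" and t :: complex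
  assumes Nr: "(sqrtN, r) \<in> {(1, 6), (sqrt 2, 4), (sqrt 3, 3), (sqrt 4, 2)}"
    and U: "open U" and hol: "\<alpha> holomorphic_on U"
    and region: "\<forall>s\<in>U. 0 < Im s \<and> cmod (\<alpha> s) < 1 \<and> cmod (1 - \<alpha> s) < 1"
    and tau: "\<forall>s\<in>U. omega1 sqrtN r (\<alpha> s) / omega0 r (\<alpha> s) = s"
    and t: "t \<in> U"
  shows "dhat 1 (Afun r \<alpha>) t = 1 / (2 * of_nat r) * Afun r \<alpha> t *
            (Ehat r \<alpha> t + (Cfun r \<alpha> t ^ r - Bfun r \<alpha> t ^ r) / Afun r \<alpha> t ^ r * Afun r \<alpha> t ^ 2)
       \<and> dhat 1 (Bfun r \<alpha>) t = 1 / (2 * of_nat r) * Bfun r \<alpha> t * (Ehat r \<alpha> t - Afun r \<alpha> t ^ 2)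
       \<and> dhat 1 (Cfun r \<alpha>) t = 1 / (2 * of_nat r) * Cfun r \<alpha> t * (Ehat r \<alpha> t + Afun r \<alpha> t ^ 2)
       \<and> dhat 2 (Ehat r \<alpha>) t = 1 / (2 * of_nat r) * (Ehat r \<alpha> t ^ 2 - Afun r \<alpha> t ^ 4)"
proof -
  have cases: "(sqrtN = 1 \<and> r = 6) \<or> (sqrtN = sqrt 2 \<and> r = 4) \<or> (sqrtN = sqrt 3 \<and> r = 3) \<or> (sqrtN = sqrt 4 \<and> r = 2)"
    using Nr by auto
  have s4: "sqrt 4 = (2::real)" using real_sqrt_abs[of 2] by simp
  have sc: "sin (pi / real r) = sqrtN / 2" and sqp: "sqrtN > 0" and r2: "r \<ge> 2"
    using cases by (auto simp: sin_30 sin_45 sin_60 s4)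
  define ar where "ar = 1 / real r"
  have ar: "0 \<le> ar" "ar \<le> 1" using r2 by (auto simp: ar_def)
  define e where "e = (of_nat r :: complex)"
  have enz: "e \<noteq> 0" using r2 by (simp add: e_def)
  define T where "T = 2 * complex_of_real pi * \<i>"
  have Tnz: "T \<noteq> 0" by (simp add: T_def)
  define \<kappa> where "\<kappa> = complex_of_real (sin (pi*ar)/pi)"
  define c where "c = \<i> / complex_of_real sqrtN"
  have ck: "c * \<kappa> = \<i> / (2 * of_real pi)"
  proof -
    have "sin (pi*ar)/pi / sqrtN = 1 / (2*pi)" using sc sqp by (simp add: ar_def field_simps)
    then have "complex_of_real (sin (pi*ar)/pi / sqrtN) = complex_of_real (1 / (2*pi))" by simp
    then show ?thesis unfolding c_def \<kappa>_def by (simp add: field_simps)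
  qed
  have a_eq: "(1 / of_nat r :: complex) = of_real ar" by (simp add: ar_def)
  have om0: "\<And>z. omega0 r z = F ar z"
    by (simp only: omega0_def a_eq hyp2F1_eq F_def)
  have om1: "\<And>z. omega1 sqrtN r z = c * F ar (1 - z)"
    by (simp only: omega1_def a_eq hyp2F1_eq F_def c_def)
  have Aeq: "Afun r \<alpha> = (\<lambda>s. F ar (\<alpha> s))" by (simp add: fun_eq_iff Afun_def om0)
  have n1: "\<And>s. s \<in> U \<Longrightarrow> norm (\<alpha> s) < 1" and n2: "\<And>s. s \<in> U \<Longrightarrow> norm (1 - \<alpha> s) < 1"
    and ims: "\<And>s. s \<in> U \<Longrightarrow> 0 < Im s" using region by auto
  have lensU: "\<And>s. s \<in> U \<Longrightarrow> \<alpha> s \<in> lens" using n1 n2 by (simp add: lens_def)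
  have a0nz: "\<And>s. s \<in> U \<Longrightarrow> \<alpha> s \<noteq> 0" using n2 by fastforce
  have a1nz: "\<And>s. s \<in> U \<Longrightarrow> 1 - \<alpha> s \<noteq> 0" using n1 by fastforce
  have tauU: "\<And>s. s \<in> U \<Longrightarrow> c * F ar (1 - \<alpha> s) / F ar (\<alpha> s) = s"
    using tau by (simp add: om0 om1)
  have Fnz: "\<And>s. s \<in> U \<Longrightarrow> F ar (\<alpha> s) \<noteq> 0"
  proof
    fix s assume s: "s \<in> U" and "F ar (\<alpha> s) = 0"
    then have "s = 0" using tauU[OF s] by simp
    then show False using ims[OF s] by simp
  qed
  have \<alpha>d: "\<And>s. s \<in> U \<Longrightarrow> (\<alpha> has_field_derivative deriv \<alpha> s) (at s)"
    using holomorphic_derivI[OF hol U] by blast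
  have Fd: "\<And>z. norm z < 1 \<Longrightarrow> (F ar has_field_derivative F1 ar z) (at z)"
    using F_deriv[OF ar] .
  have d1: "\<And>s. s \<in> U \<Longrightarrow> ((\<lambda>u. 1 - \<alpha> u) has_field_derivative 0 - deriv \<alpha> s) (at s)"
    using DERIV_diff[OF DERIV_const \<alpha>d] by blast
  have dA: "\<And>s. s \<in> U \<Longrightarrow> ((\<lambda>u. F ar (\<alpha> u)) has_field_derivative F1 ar (\<alpha> s) * deriv \<alpha> s) (at s)"
    using DERIV_chain2[OF Fd \<alpha>d] n1 by blast
  have key: "\<And>s. s \<in> U \<Longrightarrow> deriv \<alpha> s = T * \<alpha> s * (1 - \<alpha> s) * F ar (\<alpha> s)^2"
  proof -
    fix s assume s: "s \<in> U"
    have dnum: "((\<lambda>u. c * F ar (1 - \<alpha> u)) has_field_derivative c * (F1 ar (1 - \<alpha> s) * (0 - deriv \<alpha> s))) (at s)"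
      using DERIV_cmult[OF DERIV_chain2[OF Fd[OF n2[OF s]] d1[OF s]]] .
    have dg: "((\<lambda>u. c * F ar (1 - \<alpha> u) / F ar (\<alpha> u)) has_field_derivative
       (c * (F1 ar (1 - \<alpha> s) * (0 - deriv \<alpha> s)) * F ar (\<alpha> s) - c * F ar (1 - \<alpha> s) * (F1 ar (\<alpha> s) * deriv \<alpha> s))
          / (F ar (\<alpha> s) * F ar (\<alpha> s))) (at s)"
      using DERIV_divide[OF dnum dA[OF s] Fnz[OF s]] .
    have gid: "((\<lambda>u. c * F ar (1 - \<alpha> u) / F ar (\<alpha> u)) has_field_derivative 1) (at s)"
      by (rule has_field_derivative_transform_within_open[OF DERIV_ident U s]) (use tauU in auto)
    have h1: "(c * (F1 ar (1 - \<alpha> s) * (0 - deriv \<alpha> s)) * F ar (\<alpha> s) - c * F ar (1 - \<alpha> s) * (F1 ar (\<alpha> s) * deriv \<alpha> s))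
          / (F ar (\<alpha> s) * F ar (\<alpha> s)) = 1" using DERIV_unique[OF dg gid] .
    have h2: "F ar (\<alpha> s) * ((1 - \<alpha> s) * (1 - (1 - \<alpha> s)) * F1 ar (1 - \<alpha> s)) + F ar (1 - \<alpha> s) * (\<alpha> s * (1 - \<alpha> s) * F1 ar (\<alpha> s)) = \<kappa>"
      using QW_const[OF ar lensU[OF s]] unfolding QW_def P_eq[OF ar n1[OF s]] P_eq[OF ar n2[OF s]] \<kappa>_def .
    show "deriv \<alpha> s = T * \<alpha> s * (1 - \<alpha> s) * F ar (\<alpha> s)^2"
      using keyalg[OF h1 h2 ck Fnz[OF s]] unfolding T_def .
  qed
  define E0 where "E0 s = (1 - 2 * \<alpha> s) * F ar (\<alpha> s)^2 + 2 * e * P ar (\<alpha> s) * F ar (\<alpha> s)" for s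
  have powr_pos: "\<And>z::complex. 0 < Re z \<Longrightarrow> z \<notin> \<real>\<^sub>\<le>\<^sub>0"
    by (auto simp: complex_nonpos_Reals_iff)
  have re1: "\<And>s. s \<in> U \<Longrightarrow> 0 < Re (1 - \<alpha> s)"
    using n1 abs_Re_le_cmod by (smt (verit) minus_complex.simps(1) one_complex.simps(1))
  have re0: "\<And>s. s \<in> U \<Longrightarrow> 0 < Re (\<alpha> s)"
    using n2 abs_Re_le_cmod by (smt (verit) minus_complex.simps(1) one_complex.simps(1))
  have Eeq: "\<And>s. s \<in> U \<Longrightarrow> Efun r \<alpha> s = E0 s"
  proof -
    fix s assume s: "s \<in> U"
    define h0 where "h0 u = \<alpha> u * (1 - \<alpha> u) * F ar (\<alpha> u)^(2*r)" for u
    have hU: "\<And>u. u \<in> U \<Longrightarrow> h0 u = Cfun r \<alpha> u ^ r * Bfun r \<alpha> u ^ r"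
    proof -
      fix u assume u: "u \<in> U"
      have Ce: "Cfun r \<alpha> u ^ r = \<alpha> u * F ar (\<alpha> u) ^ r"
        unfolding Cfun_def power_mult_distrib Aeq using powr_root[OF a0nz[OF u]] r2 by simp
      have Be: "Bfun r \<alpha> u ^ r = (1 - \<alpha> u) * F ar (\<alpha> u) ^ r"
        unfolding Bfun_def power_mult_distrib Aeq using powr_root[OF a1nz[OF u]] r2 by simp
      show "h0 u = Cfun r \<alpha> u ^ r * Bfun r \<alpha> u ^ r"
        unfolding h0_def Ce Be mult_2 power_add by (simp only: ac_simps)
    qed
    have dh0: "(h0 has_field_derivative
        (deriv \<alpha> s * (1 - \<alpha> s) + \<alpha> s * (0 - deriv \<alpha> s)) * F ar (\<alpha> s)^(2*r)
        + \<alpha> s * (1 - \<alpha> s) * (of_nat (2*r) * ((F1 ar (\<alpha> s) * deriv \<alpha> s) * F ar (\<alpha> s)^(2*r - Suc 0)))) (at s)"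
      unfolding h0_def by (rule DERIV_cong[OF DERIV_mult[OF DERIV_mult[OF \<alpha>d[OF s] d1[OF s]] DERIV_power[OF dA[OF s]]]]) (simp only: ac_simps)
    have dh: "((\<lambda>u. Cfun r \<alpha> u ^ r * Bfun r \<alpha> u ^ r) has_field_derivative
        (deriv \<alpha> s * (1 - \<alpha> s) + \<alpha> s * (0 - deriv \<alpha> s)) * F ar (\<alpha> s)^(2*r)
        + \<alpha> s * (1 - \<alpha> s) * (of_nat (2*r) * ((F1 ar (\<alpha> s) * deriv \<alpha> s) * F ar (\<alpha> s)^(2*r - Suc 0)))) (at s)"
      by (rule has_field_derivative_transform_within_open[OF dh0 U s]) (use hU in auto)
    have "Efun r \<alpha> s = ((deriv \<alpha> s * (1 - \<alpha> s) + \<alpha> s * (0 - deriv \<alpha> s)) * F ar (\<alpha> s)^(2*r)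
        + \<alpha> s * (1 - \<alpha> s) * (of_nat (2*r) * ((F1 ar (\<alpha> s) * deriv \<alpha> s) * F ar (\<alpha> s)^(2*r - Suc 0)))) / T
        / (\<alpha> s * (1 - \<alpha> s) * F ar (\<alpha> s)^(2*r))"
      unfolding Efun_def dtau_hol[OF dh] hU[OF s, symmetric] h0_def T_def ..
    also have "\<dots> = (1 - 2 * \<alpha> s) * F ar (\<alpha> s)^2 + of_nat (2*r) * (\<alpha> s * (1 - \<alpha> s) * F1 ar (\<alpha> s)) * F ar (\<alpha> s)"
      by (rule algEf[OF key[OF s] Tnz a0nz[OF s] a1nz[OF s] Fnz[OF s]]) (use r2 in simp)
    also have "\<dots> = E0 s" unfolding E0_def P_eq[OF ar n1[OF s]] e_def by simp
    finally show "Efun r \<alpha> s = E0 s" .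
  qed
  have CeU: "\<And>u. u \<in> U \<Longrightarrow> Cfun r \<alpha> u ^ r = \<alpha> u * F ar (\<alpha> u) ^ r"
    unfolding Cfun_def power_mult_distrib Aeq using powr_root[OF a0nz] r2 by simp
  have BeU: "\<And>u. u \<in> U \<Longrightarrow> Bfun r \<alpha> u ^ r = (1 - \<alpha> u) * F ar (\<alpha> u) ^ r"
    unfolding Bfun_def power_mult_distrib Aeq using powr_root[OF a1nz] r2 by simp
  have Peq: "P ar (\<alpha> t) = \<alpha> t * (1 - \<alpha> t) * F1 ar (\<alpha> t)" using P_eq[OF ar n1[OF t]] .
  have a1e: "deriv \<alpha> t = T * \<alpha> t * (1 - \<alpha> t) * F ar (\<alpha> t)^2" using key[OF t] .
  have ypos: "Im t > 0" using ims[OF t] .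
  define z0 where "z0 = complex_of_real (1/(pi*Im t))"
  define Kc where "Kc = - real r / (2*pi)"
  have c1: "complex_of_real (1 / 12 * (-3 / (pi * Im t))) = -z0/4"
  proof -
    have "1 / 12 * (-3 / (pi * Im t)) = - (1/(pi*Im t)) / 4" by simp
    then show ?thesis unfolding z0_def by (simp only: of_real_minus of_real_divide) simp
  qed
  have c2: "complex_of_real (2 / 12 * (-3 / (pi * Im t))) = -z0/2"
  proof -
    have "2 / 12 * (-3 / (pi * Im t)) = - (1/(pi*Im t)) / 2" by simp
    then show ?thesis unfolding z0_def by (simp only: of_real_minus of_real_divide) simp
  qed
  have c3: "\<And>s. complex_of_real (real r / 6 * (-3 / (pi * Im s))) = -e*complex_of_real (1/(pi*Im s))/2"
  proof -
    fix s
    have "real r / 6 * (-3 / (pi * Im s)) = - (real r * (1/(pi*Im s))) / 2" by simp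
    then show "complex_of_real (real r / 6 * (-3 / (pi * Im s))) = -e*complex_of_real (1/(pi*Im s))/2"
      unfolding e_def by (simp only: of_real_minus of_real_divide of_real_mult) simp
  qed
  have c4: "complex_of_real (Kc / (4 * pi * (Im t)^2)) = -e*z0^2/8"
  proof -
    have "Kc / (4 * pi * (Im t)^2) = - (real r * (1/(pi*Im t))^2) / 8"
      unfolding Kc_def by (simp add: field_simps power2_eq_square)
    then show ?thesis unfolding z0_def e_def by (simp only: of_real_minus of_real_divide of_real_mult of_real_power) simp
  qed
  have Ehat_t: "Ehat r \<alpha> t = E0 t + (-e*z0/2)"
    unfolding Ehat_def Eeq[OF t] c3 z0_def by simp
  have EhatU: "\<And>s. s \<in> U \<Longrightarrow> Ehat r \<alpha> s = E0 s + complex_of_real (Kc * inverse (Im s))"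
  proof -
    fix s assume s: "s \<in> U"
    have "real r / 6 * (-3 / (pi * Im s)) = Kc * inverse (Im s)"
      using ims[OF s] by (simp add: Kc_def field_simps)
    then show "Ehat r \<alpha> s = E0 s + complex_of_real (Kc * inverse (Im s))"
      unfolding Ehat_def Eeq[OF s] by simp
  qed
  have lam: "complex_of_real (ar * (1 - ar)) = (1/e)*(1-1/e)"
    unfolding ar_def e_def by simp
  define DE where "DE = ((-2*deriv \<alpha> t)*F ar (\<alpha> t)^2 + (1-2*\<alpha> t)*(2*F ar (\<alpha> t)*(F1 ar (\<alpha> t)*deriv \<alpha> t))
      + 2*e*((complex_of_real (ar * (1 - ar))*F ar (\<alpha> t)*deriv \<alpha> t)*F ar (\<alpha> t)
      + (\<alpha> t*(1-\<alpha> t)*F1 ar (\<alpha> t))*(F1 ar (\<alpha> t)*deriv \<alpha> t)))"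
  have dlin: "((\<lambda>s. 1 - 2 * \<alpha> s) has_field_derivative 0 - 2 * deriv \<alpha> t) (at t)"
    using DERIV_diff[OF DERIV_const DERIV_cmult[OF \<alpha>d[OF t]]] by blast
  have dsq: "((\<lambda>s. F ar (\<alpha> s)^2) has_field_derivative of_nat 2 * ((F1 ar (\<alpha> t) * deriv \<alpha> t) * F ar (\<alpha> t)^(2 - Suc 0))) (at t)"
    using DERIV_power[OF dA[OF t]] .
  have dP: "((\<lambda>s. 2 * e * P ar (\<alpha> s)) has_field_derivative 2 * e * (complex_of_real (ar * (1 - ar)) * F ar (\<alpha> t) * deriv \<alpha> t)) (at t)"
    using DERIV_cmult[OF DERIV_chain2[OF P_deriv[OF ar n1[OF t]] \<alpha>d[OF t]]] .
  have dE0: "(E0 has_field_derivative DE) (at t)"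
    unfolding E0_def
    by (rule DERIV_cong[OF DERIV_add[OF DERIV_mult[OF dlin dsq] DERIV_mult[OF dP dA[OF t]]]])
       (simp add: DE_def Peq algebra_simps)
  have dEhat: "dtau (Ehat r \<alpha>) t = DE / T + (-e*z0^2/8)"
    using dtau_nonhol[OF dE0 _ U t EhatU] ypos c4 unfolding T_def by simp
  have dtA: "dtau (Afun r \<alpha>) t = F1 ar (\<alpha> t) * deriv \<alpha> t / T"
    unfolding Aeq T_def using dtau_hol[OF dA[OF t]] .
  have PA: "dhat 1 (Afun r \<alpha>) t = 1 / (2 * of_nat r) * Afun r \<alpha> t *
            (Ehat r \<alpha> t + (Cfun r \<alpha> t ^ r - Bfun r \<alpha> t ^ r) / Afun r \<alpha> t ^ r * Afun r \<alpha> t ^ 2)"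
  proof -
    have "dhat 1 (Afun r \<alpha>) t = F1 ar (\<alpha> t) * deriv \<alpha> t / T + (-z0/4) * F ar (\<alpha> t)"
      unfolding dhat_def dtA c1 by (simp add: Aeq)
    also have "\<dots> = 1/(2*e)*F ar (\<alpha> t)*(((1-2*\<alpha> t)*F ar (\<alpha> t)^2 + 2*e*(\<alpha> t*(1-\<alpha> t)*F1 ar (\<alpha> t))*F ar (\<alpha> t) + (-e*z0/2))
     + (\<alpha> t*F ar (\<alpha> t)^r - (1-\<alpha> t)*F ar (\<alpha> t)^r)/F ar (\<alpha> t)^r*F ar (\<alpha> t)^2)"
      by (rule algA[OF a1e Tnz Fnz[OF t] enz])
    also have "\<dots> = 1 / (2 * of_nat r) * Afun r \<alpha> t *
            (Ehat r \<alpha> t + (Cfun r \<alpha> t ^ r - Bfun r \<alpha> t ^ r) / Afun r \<alpha> t ^ r * Afun r \<alpha> t ^ 2)"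
      unfolding Ehat_t E0_def CeU[OF t] BeU[OF t] Peq e_def Aeq by (rule refl)
    finally show ?thesis .
  qed
  have Beq: "Bfun r \<alpha> = (\<lambda>s. (1 - \<alpha> s) powr (1/of_nat r) * F ar (\<alpha> s))"
    by (simp add: fun_eq_iff Bfun_def Aeq)
  have Ceq: "Cfun r \<alpha> = (\<lambda>s. (\<alpha> s) powr (1/of_nat r) * F ar (\<alpha> s))"
    by (simp add: fun_eq_iff Cfun_def Aeq)
  have dpowB: "((\<lambda>s. (1 - \<alpha> s) powr (1/of_nat r)) has_field_derivative
      (1/of_nat r * (1 - \<alpha> t) powr (1/of_nat r - 1)) * (0 - deriv \<alpha> t)) (at t)"
    using DERIV_chain2[OF has_field_derivative_powr[OF powr_pos[OF re1[OF t]]] d1[OF t]] .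
  have dpowC: "((\<lambda>s. (\<alpha> s) powr (1/of_nat r)) has_field_derivative
      (1/of_nat r * (\<alpha> t) powr (1/of_nat r - 1)) * deriv \<alpha> t) (at t)"
    using DERIV_chain2[OF has_field_derivative_powr[OF powr_pos[OF re0[OF t]]] \<alpha>d[OF t]] .
  have dB: "(Bfun r \<alpha> has_field_derivative
     (1/e) * ((1 - \<alpha> t) powr (1/of_nat r)/(1 - \<alpha> t)) * (0 - deriv \<alpha> t) * F ar (\<alpha> t)
       + (1 - \<alpha> t) powr (1/of_nat r) * (F1 ar (\<alpha> t) * deriv \<alpha> t)) (at t)"
    unfolding Beq
    by (rule DERIV_cong[OF DERIV_mult[OF dpowB dA[OF t]]])
       (simp only: powr_m1[OF a1nz[OF t]] e_def ac_simps)
  have dC: "(Cfun r \<alpha> has_field_derivative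
     (1/e) * ((\<alpha> t) powr (1/of_nat r)/(\<alpha> t)) * (deriv \<alpha> t) * F ar (\<alpha> t)
       + (\<alpha> t) powr (1/of_nat r) * (F1 ar (\<alpha> t) * deriv \<alpha> t)) (at t)"
    unfolding Ceq
    by (rule DERIV_cong[OF DERIV_mult[OF dpowC dA[OF t]]])
       (simp only: powr_m1[OF a0nz[OF t]] e_def ac_simps)
  have PB: "dhat 1 (Bfun r \<alpha>) t = 1 / (2 * of_nat r) * Bfun r \<alpha> t * (Ehat r \<alpha> t - Afun r \<alpha> t ^ 2)"
  proof -
    have "dhat 1 (Bfun r \<alpha>) t = ((1/e) * ((1 - \<alpha> t) powr (1/of_nat r)/(1 - \<alpha> t)) * (0 - deriv \<alpha> t) * F ar (\<alpha> t)
       + (1 - \<alpha> t) powr (1/of_nat r) * (F1 ar (\<alpha> t) * deriv \<alpha> t)) / T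
       + (-z0/4) * ((1 - \<alpha> t) powr (1/of_nat r) * F ar (\<alpha> t))"
      unfolding dhat_def dtau_hol[OF dB] c1 T_def by (simp add: Beq)
    also have "\<dots> = 1/(2*e)*((1 - \<alpha> t) powr (1/of_nat r) * F ar (\<alpha> t))*(((1-2*\<alpha> t)*F ar (\<alpha> t)^2
       + 2*e*(\<alpha> t*(1-\<alpha> t)*F1 ar (\<alpha> t))*F ar (\<alpha> t) + (-e*z0/2)) - F ar (\<alpha> t)^2)"
      by (rule algB[OF a1e Tnz Fnz[OF t] enz a1nz[OF t]])
    also have "\<dots> = 1 / (2 * of_nat r) * Bfun r \<alpha> t * (Ehat r \<alpha> t - Afun r \<alpha> t ^ 2)"
      unfolding Ehat_t E0_def Peq e_def Aeq Beq by (rule refl)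
    finally show ?thesis .
  qed
  have PC: "dhat 1 (Cfun r \<alpha>) t = 1 / (2 * of_nat r) * Cfun r \<alpha> t * (Ehat r \<alpha> t + Afun r \<alpha> t ^ 2)"
  proof -
    have "dhat 1 (Cfun r \<alpha>) t = ((1/e) * ((\<alpha> t) powr (1/of_nat r)/(\<alpha> t)) * (deriv \<alpha> t) * F ar (\<alpha> t)
       + (\<alpha> t) powr (1/of_nat r) * (F1 ar (\<alpha> t) * deriv \<alpha> t)) / T
       + (-z0/4) * ((\<alpha> t) powr (1/of_nat r) * F ar (\<alpha> t))"
      unfolding dhat_def dtau_hol[OF dC] c1 T_def by (simp add: Ceq)
    also have "\<dots> = 1/(2*e)*((\<alpha> t) powr (1/of_nat r) * F ar (\<alpha> t))*(((1-2*\<alpha> t)*F ar (\<alpha> t)^2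
       + 2*e*(\<alpha> t*(1-\<alpha> t)*F1 ar (\<alpha> t))*F ar (\<alpha> t) + (-e*z0/2)) + F ar (\<alpha> t)^2)"
      by (rule algC[OF a1e Tnz Fnz[OF t] enz a0nz[OF t]])
    also have "\<dots> = 1 / (2 * of_nat r) * Cfun r \<alpha> t * (Ehat r \<alpha> t + Afun r \<alpha> t ^ 2)"
      unfolding Ehat_t E0_def Peq e_def Aeq Ceq by (rule refl)
    finally show ?thesis .
  qed
  have PE: "dhat 2 (Ehat r \<alpha>) t = 1 / (2 * of_nat r) * (Ehat r \<alpha> t ^ 2 - Afun r \<alpha> t ^ 4)"
  proof -
    have "dhat 2 (Ehat r \<alpha>) t = DE / T + (-e*z0^2/8) + (-z0/2) * Ehat r \<alpha> t"
      unfolding dhat_def dEhat c2 ..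
    also have "\<dots> = ((-2*deriv \<alpha> t)*F ar (\<alpha> t)^2 + (1-2*\<alpha> t)*(2*F ar (\<alpha> t)*(F1 ar (\<alpha> t)*deriv \<alpha> t))
      + 2*e*(((1/e)*(1-1/e)*F ar (\<alpha> t)*deriv \<alpha> t)*F ar (\<alpha> t)
      + (\<alpha> t*(1-\<alpha> t)*F1 ar (\<alpha> t))*(F1 ar (\<alpha> t)*deriv \<alpha> t)))/T
     + (-e*z0^2/8) + (-z0/2)*(((1-2*\<alpha> t)*F ar (\<alpha> t)^2 + 2*e*(\<alpha> t*(1-\<alpha> t)*F1 ar (\<alpha> t))*F ar (\<alpha> t)) + (-e*z0/2))"
      unfolding DE_def lam Ehat_t E0_def Peq by (rule refl)
    also have "\<dots> = 1/(2*e)*((((1-2*\<alpha> t)*F ar (\<alpha> t)^2 + 2*e*(\<alpha> t*(1-\<alpha> t)*F1 ar (\<alpha> t))*F ar (\<alpha> t)) + (-e*z0/2))^2 - F ar (\<alpha> t)^4)"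
      by (rule algE[OF a1e Tnz enz])
    also have "\<dots> = 1 / (2 * of_nat r) * (Ehat r \<alpha> t ^ 2 - Afun r \<alpha> t ^ 4)"
      unfolding Ehat_t E0_def Peq e_def Aeq by (rule refl)
    finally show ?thesis .
  qed
  show ?thesis using PA PB PC PE by blast
qed

end
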